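(* For every integer $N\ge 1$ there is a quantum black-box network for input length $N$ that computes ${\rm MAJORITY}$ exactly on $N$-bit inputs and has cost at most $N+1-w(N)$.
   Context: For $X=X_0X_1\cdots X_{N-1}\in\{0,1\}^N$, ${\rm MAJORITY}(X)=0$ if $X$ contains more zeros than ones and ${\rm MAJORITY}(X)=1$ otherwise. $w(N)$ denotes the number of ones in the binary representation of $N$. A quantum black-box network for input length $N$ starts in a fixed computational basis state independent of the input $X$, applies a sequence of unitary operators, each being either an arbitrary unitary independent of $X$ or the query unitary $U_X:|i,b,z\rangle\mapsto|i,b\oplus X_i,z\rangle$ (with $i\in\{0,\dots,N-1\}$ an index, $b$ a bit, $z$ the rest of the workspace), and finally measures in the computational basis; its output is a function of the observed basis state. Its cost is the number of applications of $U_X$. It computes $f$ exactly if on every input $X$ it outputs $f(X)$ with probability $1$. *)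

theory Defs
  imports Complex_Main
begin

fun binweight :: "nat \<Rightarrow> nat" where
  "binweight n = (if n = 0 then 0 else n mod 2 + binweight (n div 2))"

text \<open>MAJORITY of X_0 ... X_{N-1} (True encodes bit 1): 0 iff more zeros than ones.\<close>
definition majority :: "nat \<Rightarrow> (nat \<Rightarrow> bool) \<Rightarrow> bool" where
  "majority N X = (\<not> (card {i. i < N \<and> X i} < card {i. i < N \<and> \<not> X i}))"

text \<open>Computational basis states |i,b,z>: index i < N, bit b, workspace z < M.\<close>
type_synonym bstate = "nat \<times> bool \<times> nat"

definition basis_set :: "nat \<Rightarrow> nat \<Rightarrow> bstate set" where
  "basis_set N M = {0..<N} \<times> (UNIV :: bool set) \<times> {0..<M}"

text \<open>An operator on the span of S is a matrix indexed by basis states (zero outside S).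
  It is unitary if U^* U = I on S (for finite square matrices this is unitarity).\<close>
definition unitary_on :: "bstate set \<Rightarrow> (bstate \<Rightarrow> bstate \<Rightarrow> complex) \<Rightarrow> bool" where
  "unitary_on S U \<longleftrightarrow>
     (\<forall>x\<in>S. \<forall>y\<in>S. (\<Sum>k\<in>S. cnj (U k x) * U k y) = (if x = y then 1 else 0)) \<and>
     (\<forall>x y. x \<notin> S \<or> y \<notin> S \<longrightarrow> U x y = 0)"

definition query_op :: "nat \<Rightarrow> nat \<Rightarrow> (nat \<Rightarrow> bool) \<Rightarrow> bstate \<Rightarrow> bstate \<Rightarrow> complex" where
  "query_op N M X = (\<lambda>(i', b', z') (i, b, z).
     if (i, b, z) \<in> basis_set N M \<and> i' = i \<and> z' = z \<and> b' = (b \<noteq> X i) then 1 else 0)"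

datatype step = Query | Gate "bstate \<Rightarrow> bstate \<Rightarrow> complex"

definition apply_op :: "bstate set \<Rightarrow> (bstate \<Rightarrow> bstate \<Rightarrow> complex) \<Rightarrow> (bstate \<Rightarrow> complex) \<Rightarrow> (bstate \<Rightarrow> complex)" where
  "apply_op S U v = (\<lambda>x. \<Sum>y\<in>S. U x y * v y)"

fun run :: "nat \<Rightarrow> nat \<Rightarrow> (nat \<Rightarrow> bool) \<Rightarrow> step list \<Rightarrow> (bstate \<Rightarrow> complex) \<Rightarrow> (bstate \<Rightarrow> complex)" where
  "run N M X [] v = v"
| "run N M X (Query # gs) v = run N M X gs (apply_op (basis_set N M) (query_op N M X) v)"
| "run N M X (Gate U # gs) v = run N M X gs (apply_op (basis_set N M) U v)"

definition ket :: "bstate \<Rightarrow> bstate \<Rightarrow> complex" where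
  "ket s = (\<lambda>x. if x = s then 1 else 0)"

definition cost :: "step list \<Rightarrow> nat" where
  "cost gs = length (filter (\<lambda>g. g = Query) gs)"

definition network_ok :: "nat \<Rightarrow> nat \<Rightarrow> bstate \<Rightarrow> step list \<Rightarrow> bool" where
  "network_ok N M s0 gs \<longleftrightarrow> s0 \<in> basis_set N M \<and>
     (\<forall>U. Gate U \<in> set gs \<longrightarrow> unitary_on (basis_set N M) U)"

definition out_prob :: "nat \<Rightarrow> nat \<Rightarrow> bstate \<Rightarrow> step list \<Rightarrow> (bstate \<Rightarrow> bool) \<Rightarrow> (nat \<Rightarrow> bool) \<Rightarrow> bool \<Rightarrow> real" where
  "out_prob N M s0 gs out X r =
     (\<Sum>x\<in>{x \<in> basis_set N M. out x = r}. (cmod (run N M X gs (ket s0) x))\<^sup>2)"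

definition computes_exactly :: "nat \<Rightarrow> nat \<Rightarrow> bstate \<Rightarrow> step list \<Rightarrow> (bstate \<Rightarrow> bool) \<Rightarrow> ((nat \<Rightarrow> bool) \<Rightarrow> bool) \<Rightarrow> bool" where
  "computes_exactly N M s0 gs out f \<longleftrightarrow> (\<forall>X. out_prob N M s0 gs out X (f X) = 1)"

end

theory Submission
  imports Defs
begin


definition ad :: "(bstate \<Rightarrow> complex) \<Rightarrow> (bstate \<Rightarrow> complex) \<Rightarrow> (bstate \<Rightarrow> complex)" where
  "ad u v = (\<lambda>x. u x + v x)"
definition sm :: "complex \<Rightarrow> (bstate \<Rightarrow> complex) \<Rightarrow> (bstate \<Rightarrow> complex)" where
  "sm c v = (\<lambda>x. c * v x)"

lemma finite_basis_set[simp]: "finite (basis_set N M)"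
  unfolding basis_set_def by simp

lemma mem_basis_set[simp]: "((i,b,z) \<in> basis_set N M) = (i < N \<and> z < M)"
  unfolding basis_set_def by auto

lemma apply_ad: "apply_op S U (ad u v) = ad (apply_op S U u) (apply_op S U v)"
  unfolding apply_op_def ad_def by (simp add: distrib_left sum.distrib)

lemma apply_sm: "apply_op S U (sm c v) = sm c (apply_op S U v)"
  unfolding apply_op_def sm_def by (auto simp: sum_distrib_left mult_ac)

lemma apply_ket: "finite S \<Longrightarrow> y \<in> S \<Longrightarrow> apply_op S U (ket y) = (\<lambda>x. U x y)"
  unfolding apply_op_def ket_def by (simp add: if_distrib cong: if_cong)

definition hh :: complex where "hh = complex_of_real (1 / sqrt 2)"

lemma hh_sq: "hh * hh = 1/2"
  unfolding hh_def by (simp flip: of_real_mult)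

lemma cnj_hh[simp]: "cnj hh = hh"
  unfolding hh_def by simp

definition hb :: "bstate set \<Rightarrow> bstate \<Rightarrow> bstate \<Rightarrow> complex" where
  "hb S = (\<lambda>(i',b',z') (i,b,z). if (i,b,z) \<in> S \<and> i' = i \<and> z' = z then (if b \<and> b' then - hh else hh) else 0)"

definition sgng :: "bstate set \<Rightarrow> bstate \<Rightarrow> bstate \<Rightarrow> complex" where
  "sgng S = (\<lambda>x y. if y \<in> S \<and> x = y then (if fst (snd y) then -1 else 1) else 0)"

definition permg :: "bstate set \<Rightarrow> (bstate \<Rightarrow> bstate) \<Rightarrow> bstate \<Rightarrow> bstate \<Rightarrow> complex" where
  "permg S \<pi> = (\<lambda>x y. if y \<in> S \<and> x = \<pi> y then 1 else 0)"

lemma hb_ket: "(i,b,z) \<in> basis_set N M \<Longrightarrow> apply_op (basis_set N M) (hb (basis_set N M)) (ket (i,b,z))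
   = sm hh (ad (ket (i,False,z)) (sm (if b then -1 else 1) (ket (i,True,z))))"
  by (subst apply_ket) (auto simp: hb_def sm_def ad_def ket_def fun_eq_iff)

lemma sg_ket: "(i,b,z) \<in> S \<Longrightarrow> finite S \<Longrightarrow> apply_op S (sgng S) (ket (i,b,z))
   = sm (if b then -1 else 1) (ket (i,b,z))"
  by (subst apply_ket) (auto simp: sgng_def sm_def ket_def fun_eq_iff)

lemma perm_ket: "y \<in> S \<Longrightarrow> finite S \<Longrightarrow> apply_op S (permg S \<pi>) (ket y) = ket (\<pi> y)"
  by (subst apply_ket) (auto simp: permg_def ket_def fun_eq_iff)

lemma query_ket: "(i,b,z) \<in> basis_set N M \<Longrightarrow> apply_op (basis_set N M) (query_op N M X) (ket (i,b,z))
   = ket (i, b \<noteq> X i, z)"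
  by (subst apply_ket) (auto simp: query_op_def ket_def fun_eq_iff)

lemma unitary_perm:
  assumes "bij_betw \<pi> S S" "finite S"
  shows "unitary_on S (permg S \<pi>)"
proof -
  have inj: "inj_on \<pi> S" using assms bij_betw_def by blast
  have img: "\<pi> y \<in> S" if "y \<in> S" for y using assms that bij_betwE by blast
  { fix x y assume xy: "x \<in> S" "y \<in> S"
    have "(\<Sum>k\<in>S. cnj (permg S \<pi> k x) * permg S \<pi> k y) = (\<Sum>k\<in>S. if k = \<pi> x \<and> \<pi> x = \<pi> y then 1 else 0)"
      using xy by (intro sum.cong) (auto simp: permg_def)
    also have "\<dots> = (if \<pi> x = \<pi> y then 1 else 0)"
      using img[OF xy(1)] assms(2) by (cases "\<pi> x = \<pi> y") (simp_all add: sum.delta)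
    also have "\<dots> = (if x = y then 1 else 0)" using inj xy by (auto dest: inj_onD)
    finally have "(\<Sum>k\<in>S. cnj (permg S \<pi> k x) * permg S \<pi> k y) = (if x = y then 1 else 0)" . }
  moreover have "permg S \<pi> x y = 0" if "x \<notin> S \<or> y \<notin> S" for x y
    using that img[of y] by (auto simp: permg_def)
  ultimately show ?thesis unfolding unitary_on_def by blast
qed

lemma unitary_sg: assumes fin: "finite S" shows "unitary_on S (sgng S)"
proof -
  { fix x y assume xy: "x \<in> S" "y \<in> S"
    have "(\<Sum>k\<in>S. cnj (sgng S k x) * sgng S k y) = (\<Sum>k\<in>S. if k = x \<and> x = y then 1 else 0)"
    proof (rule sum.cong)
      fix k assume "k \<in> S"
      show "cnj (sgng S k x) * sgng S k y = (if k = x \<and> x = y then 1 else 0)"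
        using xy by (cases "k = x"; cases "x = y") (simp_all add: sgng_def)
    qed simp
    also have "\<dots> = (if x = y then 1 else 0)"
      using xy fin by (cases "x = y") (simp_all add: sum.delta)
    finally have "(\<Sum>k\<in>S. cnj (sgng S k x) * sgng S k y) = (if x = y then 1 else 0)" . }
  moreover have "sgng S x y = 0" if "x \<notin> S \<or> y \<notin> S" for x y
    using that by (auto simp: sgng_def)
  ultimately show ?thesis unfolding unitary_on_def by blast
qed

lemma unitary_hb: "unitary_on (basis_set N M) (hb (basis_set N M))"
proof -
  let ?S = "basis_set N M"
  { fix i1 b1 z1 i2 b2 z2 assume xy: "(i1,b1,z1) \<in> ?S" "(i2,b2,z2) \<in> ?S"
    let ?F = "{(i1,False,z1),(i1,True,z1)}"
    have "(\<Sum>k\<in>?S. cnj (hb ?S k (i1,b1,z1)) * hb ?S k (i2,b2,z2)) =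
          (\<Sum>k\<in>?F. cnj (hb ?S k (i1,b1,z1)) * hb ?S k (i2,b2,z2))"
      using xy by (intro sum.mono_neutral_right) (auto simp: hb_def)
    also have "\<dots> = (if (i1,b1,z1) = (i2,b2,z2) then 1 else 0)"
      using xy by (auto simp: hb_def hh_sq)
    finally have "(\<Sum>k\<in>?S. cnj (hb ?S k (i1,b1,z1)) * hb ?S k (i2,b2,z2)) =
       (if (i1,b1,z1) = (i2,b2,z2) then 1 else 0)" . }
  moreover have "hb ?S x y = 0" if "x \<notin> ?S \<or> y \<notin> ?S" for x y
    using that by (auto simp: hb_def split: prod.splits)
  ultimately show ?thesis unfolding unitary_on_def by fast
qed

lemma extend_perm:
  assumes "finite S" "A \<subseteq> S" "inj_on g A" "g ` A \<subseteq> S"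
  shows "\<exists>\<pi>. bij_betw \<pi> S S \<and> (\<forall>a\<in>A. \<pi> a = g a)"
proof -
  have "card (S - A) = card (S - g ` A)"
    using assms by (simp add: card_Diff_subset card_image finite_subset)
  then obtain h where h: "bij_betw h (S - A) (S - g ` A)"
    using assms finite_same_card_bij by blast
  define \<pi> where "\<pi> x = (if x \<in> A then g x else h x)" for x
  have "bij_betw \<pi> A (g ` A)" unfolding \<pi>_def using assms(3)
    by (simp add: bij_betw_def inj_on_def image_def) 
  moreover have "bij_betw \<pi> (S - A) (S - g ` A)" unfolding \<pi>_def using h
    by (rule bij_betw_cong[THEN iffD1, rotated]) auto
  ultimately have "bij_betw \<pi> (A \<union> (S - A)) (g ` A \<union> (S - g ` A))"
    by (rule bij_betw_combine) auto
  moreover have "A \<union> (S - A) = S" "g ` A \<union> (S - g ` A) = S" using assms by auto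
  ultimately show ?thesis unfolding \<pi>_def by auto
qed



lemma hh_sq2: "hh * (hh * x) = x / 2"
  using hh_sq by (metis mult.assoc mult.commute times_divide_eq_left mult_1)

lemma deutsch_A:
  assumes "w < M" "p < N" "q < N" "p \<noteq> q"
    "\<pi>2 (0,False,w) = (p,False,w)" "\<pi>2 (0,True,w) = (q,False,w)"
  shows "run N M X [Gate (hb (basis_set N M)), Gate (permg (basis_set N M) \<pi>2), Gate (hb (basis_set N M)),
     Gate (sgng (basis_set N M)), Query, Gate (sgng (basis_set N M)), Gate (hb (basis_set N M))] (sm c (ket (0,False,w)))
   = sm (c * hh) (ad (sm (if X p then -1 else 1) (ket (p,False,w))) (sm (if X q then -1 else 1) (ket (q,False,w))))"
proof -
  have N0: "0 < N" using assms by simp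
  show ?thesis
    using assms N0
    apply (simp add: apply_ad apply_sm hb_ket perm_ket sg_ket query_ket)
    apply (cases "X p"; cases "X q")
    apply (auto simp: fun_eq_iff ad_def sm_def ket_def hh_sq hh_sq2 algebra_simps)
    done
qed

lemma deutsch_B:
  assumes "w < M" "p < N" "q < N" "p \<noteq> q"
    "\<pi>3 (p,False,w) = (0,False,w)" "\<pi>3 (q,False,w) = (0,True,w)"
  shows "run N M X [Gate (permg (basis_set N M) \<pi>3), Gate (hb (basis_set N M))]
     (sm (c * hh) (ad (sm (if X p then -1 else 1) (ket (p,False,w))) (sm (if X q then -1 else 1) (ket (q,False,w)))))
   = sm (c * (if X p then -1 else 1)) (ket (0, X p \<noteq> X q, w))"
proof -
  have N0: "0 < N" using assms by simp
  show ?thesis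
    using assms N0
    apply (simp add: apply_ad apply_sm hb_ket perm_ket sg_ket query_ket)
    apply (cases "X p"; cases "X q")
    apply (auto simp: fun_eq_iff ad_def sm_def ket_def hh_sq hh_sq2 algebra_simps)
    done
qed

lemma run_append: "run N M X (xs @ ys) v = run N M X ys (run N M X xs v)"
proof (induction xs arbitrary: v)
  case Nil
  then show ?case by simp
next
  case (Cons g xs)
  then show ?case by (cases g) simp_all
qed



type_synonym cfgT = "(nat \<Rightarrow> nat option) \<times> nat list"

definition hasp :: "nat \<Rightarrow> (nat \<Rightarrow> nat option) \<Rightarrow> bool" where
  "hasp N e = (\<exists>a b. a < b \<and> b < N \<and> e a \<noteq> None \<and> e a = e b)"

definition pick :: "nat \<Rightarrow> cfgT \<Rightarrow> nat \<times> nat" where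
  "pick N c = (if hasp N (fst c) then (SOME (a,b). a < b \<and> b < N \<and> fst c a \<noteq> None \<and> fst c a = fst c b) else (0,1))"

definition upd :: "nat \<Rightarrow> cfgT \<Rightarrow> bool \<Rightarrow> cfgT" where
  "upd N c d = (if hasp N (fst c) then
     (let a = fst (pick N c); b = snd (pick N c); k = the (fst c a) in
      if d then ((fst c)(a := None, b := None), k # snd c)
      else ((fst c)(a := Some (Suc k), b := None), snd c))
     else c)"

fun wv :: "nat option \<Rightarrow> nat" where
  "wv None = 0" | "wv (Some k) = 2 ^ k"

fun sv :: "(nat \<Rightarrow> bool) \<Rightarrow> nat \<Rightarrow> nat option \<Rightarrow> int" where
  "sv X r None = 0" | "sv X r (Some k) = (if X r then 1 else -1) * 2 ^ k"

definition invS :: "nat \<Rightarrow> cfgT \<Rightarrow> bool" where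
  "invS N c = (N = (\<Sum>r<N. wv (fst c r)) + (\<Sum>k\<leftarrow>snd c. 2 ^ Suc k))"

definition Phi :: "nat \<Rightarrow> cfgT \<Rightarrow> nat" where
  "Phi N c = card {r. r < N \<and> fst c r \<noteq> None} + length (snd c)"

definition invD :: "nat \<Rightarrow> (nat \<Rightarrow> bool) \<Rightarrow> cfgT \<Rightarrow> bool" where
  "invD N X c = ((\<Sum>r<N. (if X r then 1 else -1::int)) = (\<Sum>r<N. sv X r (fst c r)))"

definition init :: cfgT where "init = ((\<lambda>r. Some 0), [])"

lemma pick_prop:
  assumes "hasp N (fst c)"
  shows "fst (pick N c) < snd (pick N c) \<and> snd (pick N c) < N \<and> fst c (fst (pick N c)) \<noteq> None
     \<and> fst c (fst (pick N c)) = fst c (snd (pick N c))"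
proof -
  let ?P = "\<lambda>(a,b). a < b \<and> b < N \<and> fst c a \<noteq> None \<and> fst c a = fst c b"
  have "\<exists>x. ?P x" using assms unfolding hasp_def by auto
  then have sp: "?P (SOME x. ?P x)" by (rule someI_ex)
  have pk: "pick N c = (SOME x. ?P x)" using assms by (simp add: pick_def)
  obtain a b where ab: "pick N c = (a,b)" by (cases "pick N c")
  have h: "a < b \<and> b < N \<and> fst c a \<noteq> None \<and> fst c a = fst c b"
    using sp unfolding pk[symmetric] ab prod.case .
  show ?thesis unfolding ab fst_conv snd_conv using h by blast
qed

lemma pick_N2:
  assumes "2 \<le> N"
  shows "fst (pick N c) \<noteq> snd (pick N c) \<and> fst (pick N c) < N \<and> snd (pick N c) < N"
  using pick_prop[of N c] assms by (cases "hasp N (fst c)") (auto simp: pick_def)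

lemma sum_two:
  fixes f :: "nat \<Rightarrow> 'b::comm_monoid_add"
  assumes "finite A" "a \<in> A" "b \<in> A" "a \<noteq> b"
  shows "sum f A = f a + f b + sum f (A - {a,b})"
proof -
  have "sum f A = f a + sum f (A - {a})" using assms by (simp add: sum.remove)
  also have "sum f (A - {a}) = f b + sum f (A - {a} - {b})" using assms by (simp add: sum.remove)
  also have "A - {a} - {b} = A - {a,b}" by auto
  finally show ?thesis by (simp add: add.assoc)
qed

lemma sum_upd_rest: "(\<Sum>r\<in>A - {a,b}. f r ((e(a := x, b := y)) r)) = (\<Sum>r\<in>A - {a,b}. f r (e r))"
  by (rule sum.cong) auto

lemma upd_cases:
  assumes "hasp N (fst c)"
  obtains a b k where "a < b" "b < N" "fst c a = Some k" "fst c b = Some k"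
    "upd N c d = (if d then ((fst c)(a := None, b := None), k # snd c)
      else ((fst c)(a := Some (Suc k), b := None), snd c))"
    "pick N c = (a,b)"
proof -
  obtain a b where ab: "pick N c = (a,b)" by (cases "pick N c")
  have pp: "a < b" "b < N" "fst c a \<noteq> None" "fst c a = fst c b"
    using pick_prop[OF assms] unfolding ab fst_conv snd_conv by blast+
  obtain k where k: "fst c a = Some k" using pp(3) by (cases "fst c a") auto
  then have "fst c b = Some k" using pp by simp
  note pp k this
  with that ab pp k show ?thesis using assms unfolding upd_def by (auto simp: Let_def)
qed

lemma invS_upd:
  assumes "invS N c"
  shows "invS N (upd N c d)"
proof (cases "hasp N (fst c)")
  case False then show ?thesis using assms by (simp add: upd_def)
next
  case True
  then obtain a b k where ab: "a < b" "b < N" "fst c a = Some k" "fst c b = Some k"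
    and u: "upd N c d = (if d then ((fst c)(a := None, b := None), k # snd c)
      else ((fst c)(a := Some (Suc k), b := None), snd c))" by (rule upd_cases)
  let ?A = "{..<N}"
  have mem: "a \<in> ?A" "b \<in> ?A" "a \<noteq> b" using ab by auto
  have old: "(\<Sum>r<N. wv (fst c r)) = 2^k + 2^k + (\<Sum>r\<in>?A - {a,b}. wv (fst c r))"
    using sum_two[OF _ mem, of "\<lambda>r. wv (fst c r)"] ab by simp
  show ?thesis
  proof (cases d)
    case True
    have "(\<Sum>r<N. wv (((fst c)(a := None, b := None)) r)) = (\<Sum>r\<in>?A - {a,b}. wv (fst c r))"
      using sum_two[OF _ mem, of "\<lambda>r. wv (((fst c)(a := None, b := None)) r)"] mem
      sum_upd_rest[where f="\<lambda>r. wv" and A="{..<N}" and a=a and x=None and b=b and y=None and e="fst c"] by simp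
    then show ?thesis using assms True u old unfolding invS_def by simp
  next
    case False
    have "(\<Sum>r<N. wv (((fst c)(a := Some (Suc k), b := None)) r)) = 2^Suc k + (\<Sum>r\<in>?A - {a,b}. wv (fst c r))"
      using sum_two[OF _ mem, of "\<lambda>r. wv (((fst c)(a := Some (Suc k), b := None)) r)"] mem
      sum_upd_rest[where f="\<lambda>r. wv" and A="{..<N}" and a=a and x="Some (Suc k)" and b=b and y=None and e="fst c"] by simp
    then show ?thesis using assms False u old unfolding invS_def by simp
  qed
qed

lemma invD_upd:
  assumes "invD N X c"
  shows "invD N X (upd N c (X (fst (pick N c)) \<noteq> X (snd (pick N c))))"
proof (cases "hasp N (fst c)")
  case False then show ?thesis using assms by (simp add: upd_def)
next
  case True
  let ?d = "X (fst (pick N c)) \<noteq> X (snd (pick N c))"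
  obtain a b k where ab: "a < b" "b < N" "fst c a = Some k" "fst c b = Some k"
    and u: "upd N c ?d = (if ?d then ((fst c)(a := None, b := None), k # snd c)
      else ((fst c)(a := Some (Suc k), b := None), snd c))" and p: "pick N c = (a,b)"
    by (rule upd_cases[OF True])
  let ?A = "{..<N}"
  have mem: "a \<in> ?A" "b \<in> ?A" "a \<noteq> b" using ab by auto
  have old: "(\<Sum>r<N. sv X r (fst c r)) = sv X a (Some k) + sv X b (Some k) + (\<Sum>r\<in>?A - {a,b}. sv X r (fst c r))"
    using sum_two[OF _ mem, of "\<lambda>r. sv X r (fst c r)"] ab by simp
  show ?thesis
  proof (cases "X a = X b")
    case False
    have "(\<Sum>r<N. sv X r (((fst c)(a := None, b := None)) r)) = (\<Sum>r\<in>?A - {a,b}. sv X r (fst c r))"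
      using sum_two[OF _ mem, of "\<lambda>r. sv X r (((fst c)(a := None, b := None)) r)"] mem
      sum_upd_rest[where f="sv X" and A="{..<N}" and a=a and x=None and b=b and y=None and e="fst c"] by simp
    moreover have "sv X a (Some k) + sv X b (Some k) = 0" using False by auto
    ultimately show ?thesis using assms False u old p unfolding invD_def by simp
  next
    case True
    have "(\<Sum>r<N. sv X r (((fst c)(a := Some (Suc k), b := None)) r)) = sv X a (Some (Suc k)) + (\<Sum>r\<in>?A - {a,b}. sv X r (fst c r))"
      using sum_two[OF _ mem, of "\<lambda>r. sv X r (((fst c)(a := Some (Suc k), b := None)) r)"] mem
      sum_upd_rest[where f="sv X" and A="{..<N}" and a=a and x="Some (Suc k)" and b=b and y=None and e="fst c"] by simp
    moreover have "sv X a (Some (Suc k)) = sv X a (Some k) + sv X b (Some k)" using True by auto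
    ultimately show ?thesis using assms True u old p unfolding invD_def by simp
  qed
qed

lemma Phi_upd:
  assumes "hasp N (fst c)"
  shows "Phi N (upd N c d) + 1 = Phi N c"
proof -
  obtain a b k where ab: "a < b" "b < N" "fst c a = Some k" "fst c b = Some k"
    and u: "upd N c d = (if d then ((fst c)(a := None, b := None), k # snd c)
      else ((fst c)(a := Some (Suc k), b := None), snd c))"
    by (rule upd_cases[OF assms])
  let ?R = "{r. r < N \<and> fst c r \<noteq> None}"
  have fin: "finite ?R" by simp
  have mem: "a \<in> ?R" "b \<in> ?R" using ab by auto
  show ?thesis
  proof (cases d)
    case True
    have "{r. r < N \<and> ((fst c)(a := None, b := None)) r \<noteq> None} = ?R - {a,b}" by auto
    moreover have "card (?R - {a,b}) + 2 = card ?R"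
    proof -
      have sub: "{a,b} \<subseteq> ?R" using mem by auto
      have c2: "card {a,b} = 2" using ab by simp
      have "card ?R \<ge> 2" using card_mono[OF fin sub] c2 by simp
      then show ?thesis using card_Diff_subset[OF _ sub] c2 by simp
    qed
    ultimately show ?thesis using True u unfolding Phi_def by simp
  next
    case False
    have "{r. r < N \<and> ((fst c)(a := Some (Suc k), b := None)) r \<noteq> None} = ?R - {b}" using ab by auto
    moreover have "card (?R - {b}) + 1 = card ?R"
    proof -
      have "card ?R > 0" using mem fin card_gt_0_iff by blast
      then show ?thesis using mem fin by (simp add: card_Diff_singleton)
    qed
    ultimately show ?thesis using False u unfolding Phi_def by simp
  qed
qed

lemma upd_done: "\<not> hasp N (fst c) \<Longrightarrow> upd N c d = c"
  by (simp add: upd_def)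



declare binweight.simps[simp del]

lemma bw_eq: "binweight n = n mod 2 + binweight (n div 2)"
  by (cases "n = 0") (simp_all add: binweight.simps[of n] binweight.simps[of 0])

lemma bw_0[simp]: "binweight 0 = 0" by (simp add: binweight.simps)
lemma bw_1[simp]: "binweight (Suc 0) = Suc 0" using bw_eq[of "Suc 0"] by simp

lemma bw_add: "binweight (a + b) \<le> binweight a + binweight b"
proof (induction "a + b" arbitrary: a b rule: less_induct)
  case less
  show ?case
  proof (cases "a + b = 0")
    case True then show ?thesis by simp
  next
    case False
    show ?thesis
    proof (cases "odd a \<and> odd b")
      case True
      have d: "(a + b) div 2 = a div 2 + (b div 2 + 1)" "(a + b) mod 2 = 0"
        using True by (auto elim!: oddE)
      have l1: "a div 2 + (b div 2 + 1) < a + b" using True False by (auto elim!: oddE)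
      have l2: "b div 2 + 1 < a + b" using True by (auto elim!: oddE)
      have "binweight (a + b) = binweight (a div 2 + (b div 2 + 1))" using d bw_eq[of "a+b"] by simp
      also have "\<dots> \<le> binweight (a div 2) + binweight (b div 2 + 1)" using less l1 by blast
      also have "binweight (b div 2 + 1) \<le> binweight (b div 2) + 1" using less[OF l2] by simp
      finally show ?thesis using bw_eq[of a] bw_eq[of b] True by (simp add: odd_iff_mod_2_eq_one)
    next
      case nt: False
      have d: "(a + b) div 2 = a div 2 + b div 2" "(a + b) mod 2 = a mod 2 + b mod 2"
        using nt by (auto elim!: oddE evenE)
      have l1: "a div 2 + b div 2 < a + b" using False by linarith
      have "binweight (a + b) = (a mod 2 + b mod 2) + binweight (a div 2 + b div 2)"
        using d bw_eq[of "a+b"] by simp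
      also have "\<dots> \<le> (a mod 2 + b mod 2) + (binweight (a div 2) + binweight (b div 2))"
        using less l1 by simp
      finally show ?thesis using bw_eq[of a] bw_eq[of b] by simp
    qed
  qed
qed

lemma bw_pow: "binweight (2 ^ k) = 1"
proof (induction k)
  case 0 then show ?case by simp
next
  case (Suc k)
  then show ?case using bw_eq[of "2 ^ Suc k"] by simp
qed

lemma bw_wv: "binweight (wv u) = (if u = None then 0 else 1)"
  by (cases u) (simp_all add: bw_pow)

lemma bw_sum_set:
  assumes "finite A"
  shows "binweight (\<Sum>r\<in>A. wv (e r)) \<le> card {r\<in>A. e r \<noteq> None}"
  using assms
proof (induction A rule: finite_induct)
  case empty then show ?case by simp
next
  case (insert x F)
  have "binweight (\<Sum>r\<in>insert x F. wv (e r)) \<le> binweight (wv (e x)) + binweight (\<Sum>r\<in>F. wv (e r))"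
    using insert bw_add by simp
  also have "\<dots> \<le> (if e x = None then 0 else 1) + card {r\<in>F. e r \<noteq> None}"
    using insert bw_wv by simp
  also have "\<dots> = card {r\<in>insert x F. e r \<noteq> None}"
  proof -
    have fin: "finite {r\<in>F. e r \<noteq> None}" using insert by simp
    have nx: "x \<notin> {r\<in>F. e r \<noteq> None}" using insert by simp
    show ?thesis
    proof (cases "e x = None")
      case True
      then have "{r\<in>insert x F. e r \<noteq> None} = {r\<in>F. e r \<noteq> None}" by auto
      then show ?thesis using True by simp
    next
      case False
      then have eq: "{r\<in>insert x F. e r \<noteq> None} = insert x {r\<in>F. e r \<noteq> None}" by auto
      show ?thesis by (subst eq, subst card_insert_disjoint[OF fin nx], simp add: False)
    qed
  qed
  finally show ?case .
qed

lemma bw_sum_list: "binweight (\<Sum>k\<leftarrow>cl. 2 ^ Suc k) \<le> length cl"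
proof (induction cl)
  case Nil then show ?case by simp
next
  case (Cons k cl)
  have "binweight (\<Sum>k\<leftarrow>k # cl. 2 ^ Suc k) \<le> binweight (2 ^ Suc k) + binweight (\<Sum>k\<leftarrow>cl. 2 ^ Suc k)"
    using bw_add by simp
  then show ?case using Cons bw_pow[of "Suc k"] by simp
qed

lemma bw_le_Phi:
  assumes "invS N c"
  shows "binweight N \<le> Phi N c"
proof -
  have "binweight N \<le> binweight (\<Sum>r<N. wv (fst c r)) + binweight (\<Sum>k\<leftarrow>snd c. 2 ^ Suc k)"
    using assms bw_add unfolding invS_def by metis
  also have "\<dots> \<le> card {r\<in>{..<N}. fst c r \<noteq> None} + length (snd c)"
    using bw_sum_set[of "{..<N}" "fst c"] bw_sum_list[of "snd c"] by simp
  also have "{r\<in>{..<N}. fst c r \<noteq> None} = {r. r < N \<and> fst c r \<noteq> None}" by auto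
  finally show ?thesis unfolding Phi_def .
qed

fun cf :: "nat \<Rightarrow> (nat \<Rightarrow> bool) \<Rightarrow> nat \<Rightarrow> cfgT" where
  "cf N X 0 = init"
| "cf N X (Suc t) = upd N (cf N X t) (X (fst (pick N (cf N X t))) \<noteq> X (snd (pick N (cf N X t))))"

lemma invS_init: "invS N init" unfolding invS_def init_def by simp
lemma invD_init: "invD N X init" unfolding invD_def init_def by simp
lemma Phi_init: "Phi N init = N" unfolding Phi_def init_def by simp

lemma cf_invS: "invS N (cf N X t)"
  by (induction t) (simp_all add: invS_init invS_upd)

lemma cf_invD: "invD N X (cf N X t)"
  by (induction t) (simp_all only: cf.simps invD_init invD_upd)

lemma cf_Phi: "\<not> hasp N (fst (cf N X t)) \<or> Phi N (cf N X t) + t = N"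
proof (induction t)
  case 0 then show ?case by (simp add: Phi_init)
next
  case (Suc t)
  show ?case
  proof (cases "hasp N (fst (cf N X t))")
    case True
    have "Phi N (cf N X (Suc t)) + 1 = Phi N (cf N X t)" by (simp only: cf.simps Phi_upd[OF True])
    then show ?thesis using Suc True by simp
  next
    case False
    have "cf N X (Suc t) = cf N X t" by (simp only: cf.simps upd_done[OF False])
    then show ?thesis using False by simp
  qed
qed

lemma bw_le: "binweight N \<le> N"
  using bw_le_Phi[OF invS_init, of N] Phi_init by simp

lemma cf_done: "\<not> hasp N (fst (cf N X (N - binweight N)))"
proof
  let ?T = "N - binweight N"
  assume h: "hasp N (fst (cf N X ?T))"
  then have "Phi N (cf N X ?T) + ?T = N" using cf_Phi[of N X ?T] by simp
  then have "Phi N (cf N X ?T) = binweight N" using bw_le[of N] by simp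
  moreover have "Phi N (cf N X (Suc ?T)) + 1 = Phi N (cf N X ?T)" using Phi_upd[OF h] by simp
  moreover have "binweight N \<le> Phi N (cf N X (Suc ?T))" using bw_le_Phi[OF cf_invS] by blast
  ultimately show False by simp
qed



definition rset :: "nat \<Rightarrow> (nat \<Rightarrow> nat option) \<Rightarrow> nat set" where
  "rset N e = {r. r < N \<and> e r \<noteq> None}"

definition rfin :: "nat \<Rightarrow> cfgT \<Rightarrow> nat" where
  "rfin N c = (if rset N (fst c) = {} then 0 else
     (SOME r. r \<in> rset N (fst c) \<and> (\<forall>s\<in>rset N (fst c). the (fst c s) \<le> the (fst c r))))"

lemma majority_D: "majority N X = (0 \<le> (\<Sum>r<N. (if X r then 1 else -1::int)))"
proof -
  have "(\<Sum>r<N. (if X r then 1 else -1::int)) = (\<Sum>r\<in>{..<N} \<inter> {x. X x}. 1) + (\<Sum>r\<in>{..<N} \<inter> - {x. X x}. -1)"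
    by (rule sum.If_cases) simp
  also have "\<dots> = int (card {i. i < N \<and> X i}) - int (card {i. i < N \<and> \<not> X i})"
  proof -
    have "{..<N} \<inter> {x. X x} = {i. i < N \<and> X i}" "{..<N} \<inter> - {x. X x} = {i. i < N \<and> \<not> X i}" by auto
    then show ?thesis by simp
  qed
  finally show ?thesis unfolding majority_def by linarith
qed

lemma abs_sv: "\<bar>sv X r u\<bar> = int (wv u)"
  by (cases u) auto

lemma wv_pos: "(0 < wv u) = (u \<noteq> None)"
  by (cases u) auto

lemma sum_pow2: "(\<Sum>j<k. (2::int) ^ j) = 2 ^ k - 1"
  by (induction k) auto

lemma maj_final:
  assumes nh: "\<not> hasp N (fst c)" and iD: "invD N X c"
  shows "majority N X = (if rset N (fst c) = {} then True else X (rfin N c))"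
proof (cases "rset N (fst c) = {}")
  case True
  then have "\<forall>r<N. fst c r = None" unfolding rset_def by auto
  then have "(\<Sum>r<N. sv X r (fst c r)) = 0" by simp
  then show ?thesis using iD True unfolding invD_def majority_D by simp
next
  case False
  let ?e = "fst c"
  let ?R = "rset N ?e"
  let ?f = "\<lambda>s. the (?e s)"
  have finR: "finite ?R" unfolding rset_def by simp
  have ex: "\<exists>r. r \<in> ?R \<and> (\<forall>s\<in>?R. ?f s \<le> ?f r)"
  proof -
    have "Max (?f ` ?R) \<in> ?f ` ?R" using finR False by simp
    then obtain r where r: "r \<in> ?R" "?f r = Max (?f ` ?R)" by auto
    moreover have "\<forall>s\<in>?R. ?f s \<le> ?f r" using r finR by simp
    ultimately show ?thesis by blast
  qed
  then have r0: "rfin N c \<in> ?R" "\<forall>s\<in>?R. ?f s \<le> ?f (rfin N c)"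
    using someI_ex[OF ex] False unfolding rfin_def by auto
  define r0 where "r0 = rfin N c"
  define k0 where "k0 = ?f r0"
  have er0: "?e r0 = Some k0" using r0 unfolding r0_def k0_def rset_def by auto
  have r0N: "r0 < N" using r0 unfolding r0_def rset_def by auto
  have distinct: "?e s \<noteq> ?e s'" if "s \<in> ?R" "s' \<in> ?R" "s \<noteq> s'" for s s'
  proof
    assume eq: "?e s = ?e s'"
    show False
    proof (cases "s < s'")
      case True then show False using nh eq that unfolding hasp_def rset_def by blast
    next
      case False then have "s' < s" using that by simp
      then show False using nh eq that unfolding hasp_def rset_def by (metis (mono_tags, lifting) mem_Collect_eq)
    qed
  qed
  have lt: "?f s < k0" if "s \<in> ?R - {r0}" for s
  proof -
    have "?f s \<le> k0" using r0 that unfolding k0_def r0_def by auto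
    moreover have "?e s \<noteq> ?e r0" using distinct[of s r0] that r0 unfolding r0_def by auto
    moreover have "?e s \<noteq> None" using that unfolding rset_def by auto
    ultimately show ?thesis using er0 by (cases "?e s") auto
  qed
  have inj: "inj_on ?f (?R - {r0})"
  proof (rule inj_onI)
    fix s s' assume "s \<in> ?R - {r0}" "s' \<in> ?R - {r0}" "?f s = ?f s'"
    then show "s = s'" using distinct[of s s'] unfolding rset_def by (cases "?e s"; cases "?e s'") auto
  qed
  let ?A = "{..<N} - {r0}"
  have split: "(\<Sum>r<N. sv X r (?e r)) = sv X r0 (?e r0) + (\<Sum>r\<in>?A. sv X r (?e r))"
    using r0N by (simp add: sum.remove)
  have "\<bar>\<Sum>r\<in>?A. sv X r (?e r)\<bar> \<le> (\<Sum>r\<in>?A. \<bar>sv X r (?e r)\<bar>)" by (rule sum_abs)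
  also have "\<dots> = (\<Sum>r\<in>?A. int (wv (?e r)))" by (simp add: abs_sv)
  also have "\<dots> = (\<Sum>r\<in>?R - {r0}. int (wv (?e r)))"
    by (rule sum.mono_neutral_right) (auto simp: rset_def wv_pos)
  also have "\<dots> = (\<Sum>r\<in>?R - {r0}. (2::int) ^ (?f r))"
    by (rule sum.cong) (auto simp: rset_def)
  also have "\<dots> = (\<Sum>j\<in>?f ` (?R - {r0}). (2::int) ^ j)"
    using inj by (simp add: sum.reindex)
  also have "\<dots> \<le> (\<Sum>j<k0. (2::int) ^ j)"
    by (rule sum_mono2) (use lt in auto)
  also have "\<dots> = 2 ^ k0 - 1" by (rule sum_pow2)
  finally have bound: "\<bar>\<Sum>r\<in>?A. sv X r (?e r)\<bar> \<le> 2 ^ k0 - 1" .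
  have D: "(\<Sum>r<N. (if X r then 1 else -1::int)) = sv X r0 (Some k0) + (\<Sum>r\<in>?A. sv X r (?e r))"
    using iD split er0 unfolding invD_def by simp
  show ?thesis
  proof (cases "X r0")
    case True
    then have "0 \<le> (\<Sum>r<N. (if X r then 1 else -1::int))" using D bound by (simp add: abs_le_iff)
    then show ?thesis using True False unfolding majority_D r0_def by simp
  next
    case F: False
    then have "\<not> 0 \<le> (\<Sum>r<N. (if X r then 1 else -1::int))" using D bound by (simp add: abs_le_iff)
    then show ?thesis using F False unfolding majority_D r0_def by simp
  qed
qed



definition mkperm :: "bstate set \<Rightarrow> bstate set \<Rightarrow> (bstate \<Rightarrow> bstate) \<Rightarrow> bstate \<Rightarrow> bstate" where
  "mkperm S A g = (SOME \<pi>. bij_betw \<pi> S S \<and> (\<forall>a\<in>A. \<pi> a = g a))"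

lemma mkperm_ok:
  assumes "finite S" "A \<subseteq> S" "inj_on g A" "g ` A \<subseteq> S"
  shows "bij_betw (mkperm S A g) S S \<and> (\<forall>a\<in>A. mkperm S A g a = g a)"
  unfolding mkperm_def by (rule someI_ex[OF extend_perm[OF assms]])

function cfgz :: "nat \<Rightarrow> nat \<Rightarrow> cfgT" where
  "cfgz N z = (if z \<le> 1 then init else upd N (cfgz N (z div 2)) (odd z))"
  by auto
termination by (relation "measure snd") auto

declare cfgz.simps[simp del]

definition pz :: "nat \<Rightarrow> nat \<Rightarrow> nat" where "pz N z = fst (pick N (cfgz N z))"
definition qz :: "nat \<Rightarrow> nat \<Rightarrow> nat" where "qz N z = snd (pick N (cfgz N z))"
definition rz :: "nat \<Rightarrow> nat \<Rightarrow> nat" where "rz N z = rfin N (cfgz N z)"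

fun hist :: "nat \<Rightarrow> (nat \<Rightarrow> bool) \<Rightarrow> nat \<Rightarrow> nat" where
  "hist N X 0 = 1"
| "hist N X (Suc t) = 2 * hist N X t + (if X (pz N (hist N X t)) \<noteq> X (qz N (hist N X t)) then 1 else 0)"

lemma hist_bounds: "1 \<le> hist N X t \<and> hist N X t < 2 ^ Suc t"
  by (induction t) auto

lemma cfgz_hist: "cfgz N (hist N X t) = cf N X t"
proof (induction t)
  case 0 then show ?case by (simp add: cfgz.simps)
next
  case (Suc t)
  let ?w = "hist N X t"
  let ?d = "X (pz N ?w) \<noteq> X (qz N ?w)"
  have w1: "1 \<le> ?w" using hist_bounds by blast
  have "cfgz N (hist N X (Suc t)) = upd N (cfgz N ?w) ?d"
    using w1 by (subst cfgz.simps) auto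
  then show ?case using Suc by (simp add: pz_def qz_def)
qed

definition A2 :: "nat \<Rightarrow> bstate set" where "A2 M = {(0,b,w) | b w. w < M}"
definition g2 :: "nat \<Rightarrow> bstate \<Rightarrow> bstate" where
  "g2 N = (\<lambda>(i,b,w). (if b then qz N w else pz N w, False, w))"
definition A3 :: "nat \<Rightarrow> nat \<Rightarrow> bstate set" where
  "A3 N M = {(i,False,w) | i w. w < M \<and> (i = pz N w \<or> i = qz N w)}"
definition g3 :: "nat \<Rightarrow> bstate \<Rightarrow> bstate" where
  "g3 N = (\<lambda>(i,b,w). (0, i = qz N w, w))"
definition A5 :: "nat \<Rightarrow> bstate set" where "A5 M = {(0,b,w) | b w. 2 * w + 1 < M}"
definition g5 :: "bstate \<Rightarrow> bstate" where
  "g5 = (\<lambda>(i,b,w). (0, False, 2 * w + (if b then 1 else 0)))"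
definition A6 :: "nat \<Rightarrow> bstate set" where "A6 M = {(0,False,w) | w. w < M}"
definition g6 :: "nat \<Rightarrow> bstate \<Rightarrow> bstate" where
  "g6 N = (\<lambda>(i,b,w). (rz N w, False, w))"

lemma pq_ok: "2 \<le> N \<Longrightarrow> pz N w \<noteq> qz N w \<and> pz N w < N \<and> qz N w < N"
  unfolding pz_def qz_def using pick_N2 by blast

lemma pq_ok2: "2 \<le> N \<Longrightarrow> pz N w \<noteq> qz N w" "2 \<le> N \<Longrightarrow> qz N w \<noteq> pz N w"
  "2 \<le> N \<Longrightarrow> pz N w < N" "2 \<le> N \<Longrightarrow> qz N w < N"
  using pq_ok[of N w] by auto

lemma rz_lt: "1 \<le> N \<Longrightarrow> rz N w < N"
proof -
  assume N: "1 \<le> N"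
  let ?c = "cfgz N w"
  show ?thesis
  proof (cases "rset N (fst ?c) = {}")
    case True then show ?thesis using N by (simp add: rz_def rfin_def)
  next
    case False
    let ?P = "\<lambda>r. r \<in> rset N (fst ?c) \<and> (\<forall>s\<in>rset N (fst ?c). the (fst ?c s) \<le> the (fst ?c r))"
    have fin: "finite (rset N (fst ?c))" by (simp add: rset_def)
    have "Max ((\<lambda>s. the (fst ?c s)) ` rset N (fst ?c)) \<in> (\<lambda>s. the (fst ?c s)) ` rset N (fst ?c)"
      using fin False by simp
    then obtain r where r: "r \<in> rset N (fst ?c)" "the (fst ?c r) = Max ((\<lambda>s. the (fst ?c s)) ` rset N (fst ?c))"
      by auto
    then have "?P r" using fin by simp
    then have "?P (SOME r. ?P r)" by (rule someI)
    then show ?thesis using False by (simp add: rz_def rfin_def rset_def)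
  qed
qed

lemma perm2_ok:
  assumes "2 \<le> N"
  shows "bij_betw (mkperm (basis_set N M) (A2 M) (g2 N)) (basis_set N M) (basis_set N M)
     \<and> (\<forall>w<M. mkperm (basis_set N M) (A2 M) (g2 N) (0,False,w) = (pz N w, False, w)
            \<and> mkperm (basis_set N M) (A2 M) (g2 N) (0,True,w) = (qz N w, False, w))"
proof -
  have "inj_on (g2 N) (A2 M)"
    unfolding inj_on_def using assms by (auto simp: A2_def g2_def pq_ok2 split: if_splits)
  moreover have "A2 M \<subseteq> basis_set N M" using assms by (auto simp: A2_def)
  moreover have "g2 N ` A2 M \<subseteq> basis_set N M" using assms by (auto simp: A2_def g2_def pq_ok2)
  ultimately have "bij_betw (mkperm (basis_set N M) (A2 M) (g2 N)) (basis_set N M) (basis_set N M)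
     \<and> (\<forall>a\<in>A2 M. mkperm (basis_set N M) (A2 M) (g2 N) a = g2 N a)"
    by (intro mkperm_ok) auto
  then show ?thesis by (auto simp: A2_def g2_def)
qed

lemma perm3_ok:
  assumes "2 \<le> N"
  shows "bij_betw (mkperm (basis_set N M) (A3 N M) (g3 N)) (basis_set N M) (basis_set N M)
     \<and> (\<forall>w<M. mkperm (basis_set N M) (A3 N M) (g3 N) (pz N w,False,w) = (0, False, w)
            \<and> mkperm (basis_set N M) (A3 N M) (g3 N) (qz N w,False,w) = (0, True, w))"
proof -
  have "inj_on (g3 N) (A3 N M)"
    unfolding inj_on_def using assms by (auto simp: A3_def g3_def pq_ok2)
  moreover have "A3 N M \<subseteq> basis_set N M" using assms by (auto simp: A3_def pq_ok2)
  moreover have "g3 N ` A3 N M \<subseteq> basis_set N M" using assms by (auto simp: A3_def g3_def)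
  ultimately have "bij_betw (mkperm (basis_set N M) (A3 N M) (g3 N)) (basis_set N M) (basis_set N M)
     \<and> (\<forall>a\<in>A3 N M. mkperm (basis_set N M) (A3 N M) (g3 N) a = g3 N a)"
    by (intro mkperm_ok) auto
  then have bij: "bij_betw (mkperm (basis_set N M) (A3 N M) (g3 N)) (basis_set N M) (basis_set N M)"
    and eq: "\<And>a. a \<in> A3 N M \<Longrightarrow> mkperm (basis_set N M) (A3 N M) (g3 N) a = g3 N a" by auto
  show ?thesis
  proof (intro conjI bij allI impI)
    fix w assume "w < M"
    then have "(pz N w, False, w) \<in> A3 N M" "(qz N w, False, w) \<in> A3 N M" by (auto simp: A3_def)
    then show "mkperm (basis_set N M) (A3 N M) (g3 N) (pz N w, False, w) = (0, False, w)"
      "mkperm (basis_set N M) (A3 N M) (g3 N) (qz N w, False, w) = (0, True, w)"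
      using eq assms by (auto simp: g3_def pq_ok2)
  qed
qed

lemma perm5_ok:
  assumes "1 \<le> N"
  shows "bij_betw (mkperm (basis_set N M) (A5 M) g5) (basis_set N M) (basis_set N M)
     \<and> (\<forall>w b. 2 * w + 1 < M \<longrightarrow> mkperm (basis_set N M) (A5 M) g5 (0,b,w) = (0, False, 2 * w + (if b then 1 else 0)))"
proof -
  have "inj_on g5 (A5 M)"
    by (rule inj_onI) (auto simp: A5_def g5_def split: if_splits; presburger)
  moreover have "A5 M \<subseteq> basis_set N M" using assms by (auto simp: A5_def)
  moreover have "g5 ` A5 M \<subseteq> basis_set N M" using assms by (auto simp: A5_def g5_def)
  ultimately have "bij_betw (mkperm (basis_set N M) (A5 M) g5) (basis_set N M) (basis_set N M)
     \<and> (\<forall>a\<in>A5 M. mkperm (basis_set N M) (A5 M) g5 a = g5 a)"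
    by (intro mkperm_ok) auto
  then show ?thesis by (auto simp: A5_def g5_def)
qed

lemma perm6_ok:
  assumes "1 \<le> N"
  shows "bij_betw (mkperm (basis_set N M) (A6 M) (g6 N)) (basis_set N M) (basis_set N M)
     \<and> (\<forall>w<M. mkperm (basis_set N M) (A6 M) (g6 N) (0,False,w) = (rz N w, False, w))"
proof -
  have "inj_on (g6 N) (A6 M)"
    by (rule inj_onI) (auto simp: A6_def g6_def)
  moreover have "A6 M \<subseteq> basis_set N M" using assms by (auto simp: A6_def)
  moreover have "g6 N ` A6 M \<subseteq> basis_set N M" using rz_lt[OF assms] by (auto simp: A6_def g6_def)
  ultimately have "bij_betw (mkperm (basis_set N M) (A6 M) (g6 N)) (basis_set N M) (basis_set N M)
     \<and> (\<forall>a\<in>A6 M. mkperm (basis_set N M) (A6 M) (g6 N) a = g6 N a)"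
    by (intro mkperm_ok) auto
  then show ?thesis by (auto simp: A6_def g6_def)
qed



definition Tn :: "nat \<Rightarrow> nat" where "Tn N = N - binweight N"
definition Mn :: "nat \<Rightarrow> nat" where "Mn N = 2 ^ Suc (Tn N)"

definition G2 where "G2 N M = permg (basis_set N M) (mkperm (basis_set N M) (A2 M) (g2 N))"
definition G3 where "G3 N M = permg (basis_set N M) (mkperm (basis_set N M) (A3 N M) (g3 N))"
definition G5 where "G5 N M = permg (basis_set N M) (mkperm (basis_set N M) (A5 M) g5)"
definition G6 where "G6 N M = permg (basis_set N M) (mkperm (basis_set N M) (A6 M) (g6 N))"

definition stepg :: "nat \<Rightarrow> nat \<Rightarrow> step list" where
  "stepg N M = [Gate (hb (basis_set N M)), Gate (G2 N M), Gate (hb (basis_set N M)),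
     Gate (sgng (basis_set N M)), Query, Gate (sgng (basis_set N M)), Gate (hb (basis_set N M))]
    @ [Gate (G3 N M), Gate (hb (basis_set N M))] @ [Gate (G5 N M)]"

lemma sm_1: "sm 1 v = v" by (simp add: sm_def)
lemma sm_sm: "sm a (sm b v) = sm (a * b) v" by (simp add: sm_def fun_eq_iff)

lemma step_effect:
  assumes N: "2 \<le> N" and w: "2 * w + 1 < M"
  shows "run N M X (stepg N M) (sm c (ket (0,False,w))) =
    sm (c * (if X (pz N w) then -1 else 1)) (ket (0, False, 2 * w + (if X (pz N w) \<noteq> X (qz N w) then 1 else 0)))"
proof -
  have wM: "w < M" using w by simp
  note p2 = perm2_ok[OF N, of M] and p3 = perm3_ok[OF N, of M] and p5 = perm5_ok[of N M]
  have N1: "1 \<le> N" using N by simp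
  have A: "run N M X [Gate (hb (basis_set N M)), Gate (G2 N M), Gate (hb (basis_set N M)),
     Gate (sgng (basis_set N M)), Query, Gate (sgng (basis_set N M)), Gate (hb (basis_set N M))] (sm c (ket (0,False,w)))
   = sm (c * hh) (ad (sm (if X (pz N w) then -1 else 1) (ket (pz N w,False,w))) (sm (if X (qz N w) then -1 else 1) (ket (qz N w,False,w))))"
    unfolding G2_def
    by (rule deutsch_A) (use wM pq_ok2[OF N] p2 in auto)
  have B: "run N M X [Gate (G3 N M), Gate (hb (basis_set N M))]
     (sm (c * hh) (ad (sm (if X (pz N w) then -1 else 1) (ket (pz N w,False,w))) (sm (if X (qz N w) then -1 else 1) (ket (qz N w,False,w)))))
   = sm (c * (if X (pz N w) then -1 else 1)) (ket (0, X (pz N w) \<noteq> X (qz N w), w))"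
    unfolding G3_def
    by (rule deutsch_B) (use wM pq_ok2[OF N] p3 in auto)
  have C: "run N M X [Gate (G5 N M)] (sm c' (ket (0, d, w))) = sm c' (ket (0, False, 2 * w + (if d then 1 else 0)))" for c' d
    using p5 N1 w wM unfolding G5_def by (simp add: apply_sm perm_ket)
  show ?thesis unfolding stepg_def run_append A B C ..
qed

lemma iter_effect:
  assumes N: "2 \<le> N \<or> T = 0" and tT: "t \<le> T"
  shows "\<exists>c. (c = 1 \<or> c = -1) \<and>
     run N (2 ^ Suc T) X (concat (replicate t (stepg N (2 ^ Suc T)))) (ket (0,False,1)) = sm c (ket (0,False,hist N X t))"
  using tT
proof (induction t)
  case 0 then show ?case by (intro exI[of _ 1]) (simp add: sm_1)
next
  case (Suc t)
  then obtain c where c: "c = 1 \<or> c = -1"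
    and r: "run N (2 ^ Suc T) X (concat (replicate t (stepg N (2 ^ Suc T)))) (ket (0,False,1)) = sm c (ket (0,False,hist N X t))"
    by auto
  have N2: "2 \<le> N" using N Suc by auto
  have h: "hist N X t < 2 ^ Suc t" using hist_bounds by blast
  have "(2::nat) ^ Suc t \<le> 2 ^ T" using Suc by (intro power_increasing) auto
  then have w: "2 * hist N X t + 1 < 2 ^ Suc T" using h by simp
  have cc: "concat (replicate (Suc t) xs) = concat (replicate t xs) @ xs" for xs :: "step list"
    by (induction t) auto
  let ?M = "(2::nat) ^ Suc T"
  let ?s = "if X (pz N (hist N X t)) then -1 else (1::complex)"
  have "run N ?M X (concat (replicate (Suc t) (stepg N ?M))) (ket (0,False,1))
      = run N ?M X (stepg N ?M) (sm c (ket (0,False,hist N X t)))"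
    by (simp only: cc run_append r)
  also have "\<dots> = sm (c * ?s) (ket (0,False,hist N X (Suc t)))"
    using step_effect[OF N2 w, of X c] by simp
  finally show ?case using c by (intro exI[of _ "c * ?s"]) auto
qed



lemma filter_concat_rep: "length (filter P (concat (replicate t xs))) = t * length (filter P xs)"
  by (induction t) auto

lemma set_concat_rep: "x \<in> set (concat (replicate t xs)) \<Longrightarrow> 0 < t \<and> x \<in> set xs"
  by (induction t) auto

theorem mainTheorem3:
  fixes N :: nat
  assumes "N \<ge> 1"
  shows "\<exists>M s0 gs out. network_ok N M s0 gs \<and>
           computes_exactly N M s0 gs out (majority N) \<and>
           cost gs \<le> N + 1 - binweight N"
proof -
  define T where "T = N - binweight N"
  define M where "M = (2::nat) ^ Suc T"
  define S where "S = basis_set N M"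
  define gs where "gs = concat (replicate T (stepg N M)) @ [Gate (G6 N M), Query]"
  define out where "out = (\<lambda>(i::nat,b::bool,z). if rset N (fst (cfgz N z)) = {} then True else b)"
  define s0 where "s0 = (0::nat, False, 1::nat)"
  have N1: "1 \<le> N" using assms .
  have NT: "2 \<le> N \<or> T = 0"
  proof (cases "N = 1")
    case True then show ?thesis by (simp add: T_def)
  next
    case False then show ?thesis using N1 by simp
  qed
  have M1: "1 < M" unfolding M_def using one_less_power[of "2::nat" "Suc T"] by simp
  note p6 = perm6_ok[OF N1, of M]
  have fin: "finite S" unfolding S_def by simp
  have ok: "network_ok N M s0 gs"
    unfolding network_ok_def
  proof (intro conjI allI impI)
    show "s0 \<in> basis_set N M" using N1 M1 by (simp add: s0_def)
  next
    fix U assume U: "Gate U \<in> set gs"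
    show "unitary_on (basis_set N M) U"
    proof (cases "U = G6 N M")
      case True then show ?thesis using p6 by (simp add: G6_def unitary_perm)
    next
      case False
      then have "Gate U \<in> set (concat (replicate T (stepg N M)))" using U by (auto simp: gs_def)
      then have "0 < T \<and> Gate U \<in> set (stepg N M)" by (rule set_concat_rep)
      then have T0: "0 < T" and U2: "Gate U \<in> set (stepg N M)" by auto
      have N2: "2 \<le> N" using NT T0 by simp
      have "U \<in> {hb (basis_set N M), G2 N M, sgng (basis_set N M), G3 N M, G5 N M}"
        using U2 by (auto simp: stepg_def)
      then show ?thesis
        using unitary_hb[of N M] unitary_sg[of "basis_set N M"] perm2_ok[OF N2, of M] perm3_ok[OF N2, of M]
          perm5_ok[OF N1, of M]
        by (auto simp: G2_def G3_def G5_def unitary_perm)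
    qed
  qed
  have cost: "cost gs \<le> N + 1 - binweight N"
  proof -
    have "cost gs = T + 1"
      unfolding cost_def gs_def by (simp add: filter_concat_rep stepg_def)
    moreover have "binweight N \<le> N" by (rule bw_le)
    ultimately show ?thesis unfolding T_def by linarith
  qed
  have corr: "computes_exactly N M s0 gs out (majority N)"
    unfolding computes_exactly_def
  proof
    fix X
    let ?w = "hist N X T"
    let ?r = "rz N ?w"
    let ?s = "(?r, X ?r, ?w)"
    obtain c where c: "c = 1 \<or> c = -1"
      and r: "run N M X (concat (replicate T (stepg N M))) (ket (0,False,1)) = sm c (ket (0,False,?w))"
      using iter_effect[OF NT order_refl, of X] unfolding M_def by blast
    have wM: "?w < M" using hist_bounds[of N X T] unfolding M_def by blast
    have rN: "?r < N" using rz_lt[OF N1] .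
    have final: "run N M X gs (ket s0) = sm c (ket ?s)"
      using p6 wM rN N1 unfolding gs_def s0_def
      by (simp add: run_append r[simplified] G6_def apply_sm perm_ket query_ket)
    have sS: "?s \<in> basis_set N M" using wM rN by simp
    have outs: "out ?s = majority N X"
    proof -
      have "cfgz N ?w = cf N X T" by (rule cfgz_hist)
      moreover have "\<not> hasp N (fst (cf N X T))" using cf_done[of N X] unfolding T_def .
      ultimately show ?thesis
        using maj_final[of N "cfgz N ?w" X] cf_invD[of N X T] unfolding out_def rz_def by simp
    qed
    have sq: "(cmod (sm c (ket ?s) x))\<^sup>2 = (if x = ?s then 1 else 0)" for x
      using c by (auto simp: sm_def ket_def)
    have "out_prob N M s0 gs out X (majority N X) = (\<Sum>x\<in>{x \<in> basis_set N M. out x = majority N X}. (if x = ?s then 1 else 0))"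
      unfolding out_prob_def final sq ..
    also have "\<dots> = 1" using sS outs by (simp add: sum.delta')
    finally show "out_prob N M s0 gs out X (majority N X) = 1" .
  qed
  show ?thesis using ok corr cost by blast
qed

end
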